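(* Let $x,y,z$ be nodes of a finite, connected, unweighted, undirected graph, and suppose some node $c$ is a Condorcet winner for $\{x,y,z\}$. Then $c$ is the unique generalized median of $\{x,y,z\}$.
   Context: $d$ is the shortest-path distance. A node $c$ is a Condorcet winner for a set $S$ if for every other node $y'$, $\lvert\{u\in S: d(u,c)<d(u,y')\}\rvert > \lvert\{u\in S: d(u,y')<d(u,c)\}\rvert$. A generalized median of $\{x,y,z\}$ is a node minimizing $d(u,x)+d(u,y)+d(u,z)$ over all nodes $u$. *)

theory Defs
  imports Main
begin

definition is_walk :: "'a set \<Rightarrow> ('a \<Rightarrow> 'a \<Rightarrow> bool) \<Rightarrow> 'a list \<Rightarrow> bool" where
  "is_walk V E p \<longleftrightarrow> p \<noteq> [] \<and> set p \<subseteq> V \<and> (\<forall>i. Suc i < length p \<longrightarrow> E (p ! i) (p ! Suc i))"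

definition connected_graph :: "'a set \<Rightarrow> ('a \<Rightarrow> 'a \<Rightarrow> bool) \<Rightarrow> bool" where
  "connected_graph V E \<longleftrightarrow>
     finite V \<and> V \<noteq> {} \<and>
     (\<forall>u v. E u v \<longrightarrow> u \<in> V \<and> v \<in> V) \<and>
     (\<forall>u v. E u v \<longrightarrow> E v u) \<and>
     (\<forall>u. \<not> E u u) \<and>
     (\<forall>u\<in>V. \<forall>v\<in>V. \<exists>p. is_walk V E p \<and> hd p = u \<and> last p = v)"

definition gdist :: "'a set \<Rightarrow> ('a \<Rightarrow> 'a \<Rightarrow> bool) \<Rightarrow> 'a \<Rightarrow> 'a \<Rightarrow> nat" where
  "gdist V E u v = (LEAST n. \<exists>p. is_walk V E p \<and> hd p = u \<and> last p = v \<and> length p = Suc n)"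

definition condorcet_winner :: "'a set \<Rightarrow> ('a \<Rightarrow> 'a \<Rightarrow> bool) \<Rightarrow> 'a set \<Rightarrow> 'a \<Rightarrow> bool" where
  "condorcet_winner V E S c \<longleftrightarrow> c \<in> V \<and>
     (\<forall>y'\<in>V. y' \<noteq> c \<longrightarrow>
        card {u\<in>S. gdist V E u c < gdist V E u y'} > card {u\<in>S. gdist V E u y' < gdist V E u c})"

definition generalized_median :: "'a set \<Rightarrow> ('a \<Rightarrow> 'a \<Rightarrow> bool) \<Rightarrow> 'a \<Rightarrow> 'a \<Rightarrow> 'a \<Rightarrow> 'a \<Rightarrow> bool" where
  "generalized_median V E x y z m \<longleftrightarrow> m \<in> V \<and>
     (\<forall>u\<in>V. gdist V E m x + gdist V E m y + gdist V E m z
              \<le> gdist V E u x + gdist V E u y + gdist V E u z)"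

end

theory Submission
  imports Defs
begin

lemma walk_take: "is_walk V E p \<Longrightarrow> 0 < k \<Longrightarrow> is_walk V E (take k p)"
  unfolding is_walk_def by (auto dest: in_set_takeD)

lemma walk_drop: "is_walk V E p \<Longrightarrow> k < length p \<Longrightarrow> is_walk V E (drop k p)"
  unfolding is_walk_def by (auto dest: in_set_dropD simp: add.commute)

lemma walk_rev: "(\<forall>u v. E u v \<longrightarrow> E v u) \<Longrightarrow> is_walk V E p \<Longrightarrow> is_walk V E (rev p)"
  unfolding is_walk_def
proof (intro conjI allI impI)
  fix i assume s: "\<forall>u v. E u v \<longrightarrow> E v u"
    and w: "p \<noteq> [] \<and> set p \<subseteq> V \<and> (\<forall>i. Suc i < length p \<longrightarrow> E (p ! i) (p ! Suc i))"
    and i: "Suc i < length (rev p)"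
  have "E (p ! (length p - Suc (Suc i))) (p ! Suc (length p - Suc (Suc i)))"
    using w i by auto
  moreover have "Suc (length p - Suc (Suc i)) = length p - Suc i" using i by auto
  ultimately show "E (rev p ! i) (rev p ! Suc i)" using s i by (auto simp: rev_nth)
qed auto

lemma walk_app: "is_walk V E p \<Longrightarrow> is_walk V E q \<Longrightarrow> last p = hd q \<Longrightarrow> is_walk V E (p @ tl q)"
  unfolding is_walk_def
proof (intro conjI allI impI)
  fix i assume w1: "p \<noteq> [] \<and> set p \<subseteq> V \<and> (\<forall>i. Suc i < length p \<longrightarrow> E (p ! i) (p ! Suc i))"
    and w2: "q \<noteq> [] \<and> set q \<subseteq> V \<and> (\<forall>i. Suc i < length q \<longrightarrow> E (q ! i) (q ! Suc i))"
    and l: "last p = hd q" and i: "Suc i < length (p @ tl q)"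
  show "E ((p @ tl q) ! i) ((p @ tl q) ! Suc i)"
  proof (cases "Suc i < length p")
    case True thus ?thesis using w1 by (auto simp: nth_append)
  next
    case False
    define j where "j = i + 1 - length p"
    have j: "Suc j < length q" "i + 1 = length p + j" using False i w2 w1 unfolding j_def by auto
    have a: "(p @ tl q) ! i = q ! j"
    proof (cases "j = 0")
      case True
      hence "i = length p - 1" using j w1 by auto
      thus ?thesis using True l w1 w2 by (simp add: nth_append last_conv_nth hd_conv_nth)
    next
      case False
      hence "i - length p = j - 1" "\<not> i < length p" using j by auto
      thus ?thesis using j w2 False by (auto simp: nth_append nth_tl)
    qed
    have b: "(p @ tl q) ! Suc i = q ! Suc j" using j w2 by (auto simp: nth_append nth_tl)
    show ?thesis using a b j w2 by auto
  qed
qed (auto dest: list.set_sel(2))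

lemma gdist_le: "is_walk V E p \<Longrightarrow> hd p = u \<Longrightarrow> last p = v \<Longrightarrow> gdist V E u v \<le> length p - 1"
  unfolding gdist_def
proof (rule Least_le)
  assume "is_walk V E p" "hd p = u" "last p = v"
  moreover hence "length p = Suc (length p - 1)" unfolding is_walk_def by auto
  ultimately show "\<exists>pa. is_walk V E pa \<and> hd pa = u \<and> last pa = v \<and> length pa = Suc (length p - 1)" by blast
qed

lemma gdist_walk:
  assumes "connected_graph V E" "u \<in> V" "v \<in> V"
  shows "\<exists>p. is_walk V E p \<and> hd p = u \<and> last p = v \<and> length p = Suc (gdist V E u v)"
proof -
  obtain p where p: "is_walk V E p" "hd p = u" "last p = v"
    using assms unfolding connected_graph_def by blast
  hence "length p = Suc (length p - 1)" unfolding is_walk_def by auto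
  hence "\<exists>n p. is_walk V E p \<and> hd p = u \<and> last p = v \<and> length p = Suc n" using p by blast
  thus ?thesis unfolding gdist_def by (rule LeastI_ex)
qed

context
  fixes V :: "'a set" and E
  assumes G: "connected_graph V E"
begin

lemma d_refl: "u \<in> V \<Longrightarrow> gdist V E u u = 0"
  using gdist_le[of V E "[u]" u u] by (auto simp: is_walk_def)

lemma d_sym: "u \<in> V \<Longrightarrow> v \<in> V \<Longrightarrow> gdist V E u v = gdist V E v u"
proof -
  have *: "gdist V E a b \<le> gdist V E b a" if "a \<in> V" "b \<in> V" for a b
  proof -
    obtain p where p: "is_walk V E p" "hd p = b" "last p = a" "length p = Suc (gdist V E b a)"
      using gdist_walk[OF G \<open>b \<in> V\<close> \<open>a \<in> V\<close>] by blast
    have "is_walk V E (rev p)" using walk_rev p G unfolding connected_graph_def by blast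
    moreover have "hd (rev p) = a" "last (rev p) = b" using p by (auto simp: is_walk_def hd_rev last_rev)
    ultimately show ?thesis using gdist_le[of V E "rev p" a b] p by auto
  qed
  assume "u \<in> V" "v \<in> V" thus ?thesis using *[of u v] *[of v u] by auto
qed

lemma d_tri: "u \<in> V \<Longrightarrow> v \<in> V \<Longrightarrow> w \<in> V \<Longrightarrow> gdist V E u w \<le> gdist V E u v + gdist V E v w"
proof -
  assume a: "u \<in> V" "v \<in> V" "w \<in> V"
  obtain p where p: "is_walk V E p" "hd p = u" "last p = v" "length p = Suc (gdist V E u v)"
    using gdist_walk[OF G a(1,2)] by blast
  obtain q where q: "is_walk V E q" "hd q = v" "last q = w" "length q = Suc (gdist V E v w)"
    using gdist_walk[OF G a(2,3)] by blast
  have "is_walk V E (p @ tl q)" using walk_app[OF p(1) q(1)] p q by auto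
  moreover have "hd (p @ tl q) = u" using p by (auto simp: is_walk_def)
  moreover have "last (p @ tl q) = w"
  proof (cases "tl q = []")
    case True
    hence "q = [hd q]" using q(1) unfolding is_walk_def by (cases q) auto
    thus ?thesis using True p q by (metis append.right_neutral list.sel(1) last_ConsL)
  next
    case False thus ?thesis using q by (auto simp: is_walk_def last_tl)
  qed
  ultimately show ?thesis using gdist_le[of V E "p @ tl q" u w] p q by auto
qed

lemma d_geo:
  assumes "u \<in> V" "v \<in> V" "k \<le> gdist V E u v"
  shows "\<exists>w\<in>V. gdist V E u w = k \<and> gdist V E w v = gdist V E u v - k"
proof -
  obtain p where p: "is_walk V E p" "hd p = u" "last p = v" "length p = Suc (gdist V E u v)"
    using gdist_walk[OF G assms(1,2)] by blast
  define w where "w = p ! k"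
  have kl: "k < length p" using p assms by auto
  have wV: "w \<in> V" using p kl unfolding w_def is_walk_def by auto
  have "is_walk V E (take (Suc k) p)" using walk_take p by auto
  moreover have "hd (take (Suc k) p) = u" using p kl by (auto simp: is_walk_def)
  moreover have "last (take (Suc k) p) = w" using kl unfolding w_def by (simp add: take_Suc_conv_app_nth)
  ultimately have d1: "gdist V E u w \<le> k" using gdist_le[of V E "take (Suc k) p" u w] kl by auto
  have "is_walk V E (drop k p)" using walk_drop[OF p(1) kl] .
  moreover have "hd (drop k p) = w" using kl unfolding w_def by (simp add: hd_drop_conv_nth)
  moreover have "last (drop k p) = v" using p kl by auto
  ultimately have d2: "gdist V E w v \<le> gdist V E u v - k" using gdist_le[of V E "drop k p" w v] kl p by auto
  have "gdist V E u v \<le> gdist V E u w + gdist V E w v" using d_tri assms wV by blast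
  thus ?thesis using d1 d2 wV assms by (intro bexI[of _ w]) auto
qed

lemma median_geo:
  assumes "x \<in> V" "y \<in> V" "z \<in> V" "condorcet_winner V E {x, y, z} c"
  shows "gdist V E x y = gdist V E x c + gdist V E c y"
proof (rule ccontr)
  assume ne: "gdist V E x y \<noteq> gdist V E x c + gdist V E c y"
  have cV: "c \<in> V" using assms(4) unfolding condorcet_winner_def by auto
  have tri: "gdist V E x y \<le> gdist V E x c + gdist V E c y" using d_tri assms cV by blast
  have sy: "gdist V E c y = gdist V E y c" using d_sym cV assms by blast
  define k where "k = min (gdist V E x c) (gdist V E x y)"
  obtain w where wV: "w \<in> V" and w1: "gdist V E x w = k" and w2: "gdist V E w y = gdist V E x y - k"
    using d_geo[OF assms(1,2), of k] unfolding k_def by auto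
  have w2': "gdist V E y w = gdist V E x y - k" using w2 d_sym wV assms by metis
  have le1: "gdist V E x w \<le> gdist V E x c" using w1 k_def by auto
  have le2: "gdist V E y w \<le> gdist V E y c" using w2' k_def tri sy by auto
  have strict: "gdist V E x w < gdist V E x c \<or> gdist V E y w < gdist V E y c"
    using w1 w2' k_def tri sy ne by auto
  have wc: "w \<noteq> c" using strict by auto
  let ?A = "{u\<in>{x,y,z}. gdist V E u c < gdist V E u w}"
  let ?B = "{u\<in>{x,y,z}. gdist V E u w < gdist V E u c}"
  have "card ?A > card ?B" using assms(4) wV wc unfolding condorcet_winner_def by auto
  moreover have "?A \<subseteq> {z}" using le1 le2 by auto
  hence "card ?A \<le> 1" using card_mono[of "{z}" ?A] by simp
  moreover have "card ?B \<ge> 1"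
  proof -
    have "?B \<noteq> {}" using strict by auto
    thus ?thesis by (simp add: Suc_leI card_gt_0_iff)
  qed
  ultimately show False by linarith
qed

end

theorem lemmaE2:
  fixes V :: "'a set" and E :: "'a \<Rightarrow> 'a \<Rightarrow> bool" and x y z c :: 'a
  assumes "connected_graph V E"
    and "x \<in> V" and "y \<in> V" and "z \<in> V"
    and "condorcet_winner V E {x, y, z} c"
  shows "generalized_median V E x y z c \<and> (\<forall>m. generalized_median V E x y z m \<longrightarrow> m = c)"
proof -
  note G = assms(1)
  have cV: "c \<in> V" using assms(5) unfolding condorcet_winner_def by auto
  have S1: "{y, x, z} = {x, y, z}" "{x, z, y} = {x, y, z}" "{y, z, x} = {x, y, z}" by auto
  have gxy: "gdist V E x y = gdist V E x c + gdist V E c y"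
    using median_geo[OF G assms(2,3,4,5)] .
  have gxz: "gdist V E x z = gdist V E x c + gdist V E c z"
    using median_geo[OF G assms(2,4,3)] assms(5) S1 by simp
  have gyz: "gdist V E y z = gdist V E y c + gdist V E c z"
    using median_geo[OF G assms(3,4,2)] assms(5) S1 by simp
  have sx: "gdist V E x c = gdist V E c x" and sy: "gdist V E y c = gdist V E c y"
    and sz: "gdist V E z c = gdist V E c z" using d_sym[OF G] cV assms by auto
  have bound: "gdist V E c x + gdist V E c y + gdist V E c z \<le> gdist V E m x + gdist V E m y + gdist V E m z"
    and tight: "gdist V E c x + gdist V E c y + gdist V E c z = gdist V E m x + gdist V E m y + gdist V E m z
       \<Longrightarrow> gdist V E x m = gdist V E x c \<and> gdist V E y m = gdist V E y c \<and> gdist V E z m = gdist V E z c"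
    if mV: "m \<in> V" for m
  proof -
    have t1: "gdist V E x y \<le> gdist V E x m + gdist V E m y" using d_tri[OF G] assms mV by blast
    have t2: "gdist V E x z \<le> gdist V E x m + gdist V E m z" using d_tri[OF G] assms mV by blast
    have t3: "gdist V E y z \<le> gdist V E y m + gdist V E m z" using d_tri[OF G] assms mV by blast
    have s: "gdist V E x m = gdist V E m x" "gdist V E y m = gdist V E m y" "gdist V E z m = gdist V E m z"
      using d_sym[OF G] mV assms by auto
    show "gdist V E c x + gdist V E c y + gdist V E c z \<le> gdist V E m x + gdist V E m y + gdist V E m z"
      using t1 t2 t3 s gxy gxz gyz sx sy sz by linarith
    show "gdist V E c x + gdist V E c y + gdist V E c z = gdist V E m x + gdist V E m y + gdist V E m z
       \<Longrightarrow> gdist V E x m = gdist V E x c \<and> gdist V E y m = gdist V E y c \<and> gdist V E z m = gdist V E z c"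
      using t1 t2 t3 s gxy gxz gyz sx sy sz by linarith
  qed
  have med: "generalized_median V E x y z c" unfolding generalized_median_def using cV bound by auto
  moreover have "m = c" if gm: "generalized_median V E x y z m" for m
  proof (rule ccontr)
    assume mc: "m \<noteq> c"
    have mV: "m \<in> V" using gm unfolding generalized_median_def by auto
    have "gdist V E m x + gdist V E m y + gdist V E m z \<le> gdist V E c x + gdist V E c y + gdist V E c z"
      using gm cV unfolding generalized_median_def by auto
    hence eqs: "gdist V E x m = gdist V E x c \<and> gdist V E y m = gdist V E y c \<and> gdist V E z m = gdist V E z c"
      using tight[OF mV] bound[OF mV] by linarith
    have "card {u\<in>{x,y,z}. gdist V E u c < gdist V E u m} > card {u\<in>{x,y,z}. gdist V E u m < gdist V E u c}"
      using assms(5) mV mc unfolding condorcet_winner_def by auto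
    moreover have "{u\<in>{x,y,z}. gdist V E u c < gdist V E u m} = {}" using eqs by auto
    ultimately show False by (metis card.empty less_nat_zero_code)
  qed
  ultimately show ?thesis by blast
qed

end
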